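(* Let $n\ge1$, $k\ge 1$, and let $s_1,\dots,s_k$ be nonnegative integers with $S:=\sum_{i=1}^k s_i\ge 1$. There are $k$ players who independently each open one cereal box per time step; each box contains one of $n$ coupon types chosen uniformly at random, independently of everything else. Player $i$ is currently missing $s_i$ of the $n$ coupon types, and $X_i(s_i)$ is the number of boxes player $i$ must open until they have all $n$ types. Let $P_1(s_1,\dots,s_k)$ be the probability that the first player is the slowest to complete the collection, i.e. that $X_1(s_1)=\max\{X_1(s_1),\dots,X_k(s_k)\}$. Then $$P_1(s_1,\dots,s_k)=\frac{s_1}{\sum_{i=1}^k s_i}+o(1).$$
   Context: The term $o(1)$ denotes a quantity tending to $0$ as $n\to\infty$ with $k$ and $s_1,\dots,s_k$ fixed. *)

theory Defs
  imports "HOL-Probability.Probability"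
begin

definition step_pmf :: "nat \<Rightarrow> nat \<Rightarrow> (nat \<Rightarrow> nat) pmf" where
  "step_pmf n k = Pi_pmf {..<k} 0 (\<lambda>_. pmf_of_set {..<n})"

definition coupon_space :: "nat \<Rightarrow> nat \<Rightarrow> (nat \<Rightarrow> nat) stream measure" where
  "coupon_space n k = stream_space (measure_pmf (step_pmf n k))"

text \<open>Number of boxes player i must open until all types are collected, when the
  player is missing the s types {0..<s} (by symmetry WLOG these).\<close>
definition completion_time :: "nat \<Rightarrow> nat \<Rightarrow> (nat \<Rightarrow> nat) stream \<Rightarrow> nat" where
  "completion_time s i \<omega> = (LEAST t. {..<s} \<subseteq> {(\<omega> !! j) i | j. j < t})"

text \<open>Probability that player 0 (the ``first player'') is the slowest (ties included).\<close>
definition P1 :: "nat \<Rightarrow> nat \<Rightarrow> (nat \<Rightarrow> nat) \<Rightarrow> real" where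
  "P1 n k s = measure (coupon_space n k)
     {\<omega> \<in> space (coupon_space n k). \<forall>i<k. completion_time (s i) i \<omega> \<le> completion_time (s 0) 0 \<omega>}"

end

theory Submission
  imports Defs
begin

lemma arith_core:
  fixes I :: "nat set" and c u SF gi :: "nat \<Rightarrow> real" and F g pN IM pM \<epsilon> n U :: real
  assumes fin: "finite I"
  and eqF: "F = F * pN + (\<Sum>i\<in>I. c i * SF i) + IM"
  and eq1: "1 = pN + (\<Sum>i\<in>I. c i * u i) + pM"
  and IM: "0 \<le> IM" "IM \<le> pM"
  and SF: "\<And>i. i\<in>I \<Longrightarrow> \<bar>SF i - u i * gi i\<bar> \<le> u i * \<epsilon>"
  and gi: "\<And>i. i\<in>I \<Longrightarrow> u i \<noteq> 0 \<Longrightarrow> 0 \<le> gi i \<and> gi i \<le> 1" and g: "0 \<le> g" "g \<le> 1"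
  and gsum: "(\<Sum>i\<in>I. u i * gi i) = U * g" and U: "U = (\<Sum>i\<in>I. u i)"
  and c: "\<And>i. i\<in>I \<Longrightarrow> 1/n - U/n^2 \<le> c i \<and> c i \<le> 1/n \<and> 0 \<le> c i"
  and u: "\<And>i. i\<in>I \<Longrightarrow> 0 \<le> u i" and eps: "0 \<le> \<epsilon>"
  and D: "1 - pN \<ge> 1/n" and pN: "pN \<ge> 1 - U/n" and n: "n > 0"
  shows "\<bar>F - g\<bar> \<le> \<epsilon> + 2*U^2/n"
proof -
  define D where "D = 1 - pN"
  have FD: "F * D = (\<Sum>i\<in>I. c i * SF i) + IM" using eqF unfolding D_def by (simp add: algebra_simps)
  have D1: "D = (\<Sum>i\<in>I. c i * u i) + pM" using eq1 unfolding D_def by simp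
  have s1: "(\<Sum>i\<in>I. c i * (SF i - u i * gi i)) = (\<Sum>i\<in>I. c i * SF i) - (\<Sum>i\<in>I. c i * u i * gi i)"
    by (simp add: sum_subtractf algebra_simps)
  have s2: "(\<Sum>i\<in>I. (c i - 1/n) * u i * (gi i - g)) =
      (\<Sum>i\<in>I. c i * u i * gi i) - g * (\<Sum>i\<in>I. c i * u i) - (1/n) * ((\<Sum>i\<in>I. u i * gi i) - g * (\<Sum>i\<in>I. u i))"
  proof -
    have "(\<Sum>i\<in>I. (c i - 1/n) * u i * (gi i - g)) = (\<Sum>i\<in>I. c i * u i * gi i - g * (c i * u i) - (1/n) * (u i * gi i - g * u i))"
      by (rule sum.cong) (simp_all add: algebra_simps diff_divide_distrib)
    also have "\<dots> = (\<Sum>i\<in>I. c i * u i * gi i) - g * (\<Sum>i\<in>I. c i * u i) - (1/n) * ((\<Sum>i\<in>I. u i * gi i) - g * (\<Sum>i\<in>I. u i))"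
      by (simp only: sum_subtractf sum_distrib_left[symmetric])
    finally show ?thesis .
  qed
  have s2': "(1/n) * ((\<Sum>i\<in>I. u i * gi i) - g * (\<Sum>i\<in>I. u i)) = 0"
    using gsum U by simp
  have e1: "(F - g) * D = (\<Sum>i\<in>I. c i * (SF i - u i * gi i)) + (\<Sum>i\<in>I. (c i - 1/n) * u i * (gi i - g)) + (IM - g * pM)"
  proof -
    have gD: "g * D = g * (\<Sum>i\<in>I. c i * u i) + g * pM" using D1 by (simp add: algebra_simps)
    have "(F - g) * D = F * D - g * D" by (simp only: left_diff_distrib)
    then show ?thesis using FD gD s1 s2 s2' by linarith
  qed
  have pM0: "0 \<le> pM" using IM by simp
  have U0: "0 \<le> U" using U u by (simp add: sum_nonneg)
  have pM: "pM \<le> U^2/n^2"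
  proof -
    have "(\<Sum>i\<in>I. (1/n - U/n^2) * u i) \<le> (\<Sum>i\<in>I. c i * u i)"
      using c u by (intro sum_mono mult_right_mono) auto
    moreover have "(\<Sum>i\<in>I. (1/n - U/n^2) * u i) = (1/n - U/n^2) * U"
      using U by (simp only: sum_distrib_left[symmetric])
    moreover have "(1/n - U/n^2) * U = U/n - U^2/n^2"
      by (simp add: power2_eq_square algebra_simps)
    ultimately show ?thesis using eq1 pN by linarith
  qed
  have b1: "\<bar>\<Sum>i\<in>I. c i * (SF i - u i * gi i)\<bar> \<le> \<epsilon> * D"
  proof -
    have "\<bar>\<Sum>i\<in>I. c i * (SF i - u i * gi i)\<bar> \<le> (\<Sum>i\<in>I. \<bar>c i * (SF i - u i * gi i)\<bar>)"
      by (rule sum_abs)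
    also have "\<dots> \<le> (\<Sum>i\<in>I. c i * (u i * \<epsilon>))"
    proof (rule sum_mono)
      fix i assume i: "i \<in> I"
      have "\<bar>c i * (SF i - u i * gi i)\<bar> = c i * \<bar>SF i - u i * gi i\<bar>" using c[OF i] by (simp add: abs_mult)
      also have "\<dots> \<le> c i * (u i * \<epsilon>)" using c[OF i] SF[OF i] by (simp add: mult_left_mono)
      finally show "\<bar>c i * (SF i - u i * gi i)\<bar> \<le> c i * (u i * \<epsilon>)" .
    qed
    also have "\<dots> = \<epsilon> * (\<Sum>i\<in>I. c i * u i)" by (simp add: sum_distrib_left algebra_simps)
    also have "\<dots> \<le> \<epsilon> * D" using D1 pM0 eps by (simp add: mult_left_mono)
    finally show ?thesis .
  qed
  have b2: "\<bar>\<Sum>i\<in>I. (c i - 1/n) * u i * (gi i - g)\<bar> \<le> U^2/n^2"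
  proof -
    have "\<bar>\<Sum>i\<in>I. (c i - 1/n) * u i * (gi i - g)\<bar> \<le> (\<Sum>i\<in>I. \<bar>(c i - 1/n) * u i * (gi i - g)\<bar>)"
      by (rule sum_abs)
    also have "\<dots> \<le> (\<Sum>i\<in>I. (U/n^2) * u i)"
    proof (rule sum_mono)
      fix i assume i: "i \<in> I"
      have a1: "\<bar>c i - 1/n\<bar> \<le> U/n^2" using c[OF i] by linarith
      have a2: "u i * \<bar>gi i - g\<bar> \<le> u i * 1"
      proof (cases "u i = 0")
        case False then show ?thesis using gi[OF i] g u[OF i] by (intro mult_left_mono) (auto simp: abs_le_iff)
      qed simp
      have "\<bar>(c i - 1/n) * u i * (gi i - g)\<bar> = \<bar>c i - 1/n\<bar> * (u i * \<bar>gi i - g\<bar>)"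
        using u[OF i] by (simp add: abs_mult)
      also have "\<dots> \<le> (U/n^2) * (u i * 1)"
        by (rule mult_mono[OF a1 a2]) (use u[OF i] U0 n in auto)
      finally show "\<bar>(c i - 1/n) * u i * (gi i - g)\<bar> \<le> (U/n^2) * u i" by simp
    qed
    also have "\<dots> = U^2/n^2" using U by (simp only: sum_distrib_left[symmetric] power2_eq_square) simp
    finally show ?thesis .
  qed
  have b3: "\<bar>IM - g * pM\<bar> \<le> U^2/n^2"
  proof -
    have "g * pM \<le> pM" using g pM0 by (simp add: mult_left_le_one_le)
    moreover have "0 \<le> g * pM" using g pM0 by simp
    ultimately have "\<bar>IM - g * pM\<bar> \<le> pM" using IM by linarith
    then show ?thesis using pM by linarith
  qed
  have Dpos: "D > 0" using D n unfolding D_def by (smt (verit) divide_pos_pos)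
  have main: "\<bar>F - g\<bar> * D \<le> \<epsilon> * D + 2 * U^2/n^2"
    using e1 b1 b2 b3 by (simp add: abs_mult[symmetric])
  have "\<bar>F - g\<bar> = (\<bar>F - g\<bar> * D) / D" using Dpos by simp
  also have "\<dots> \<le> (\<epsilon> * D + 2 * U^2/n^2) / D" using main Dpos by (intro divide_right_mono) auto
  also have "\<dots> = \<epsilon> + 2 * U^2/n^2 / D" using Dpos by (simp add: add_divide_distrib)
  also have "2 * U^2/n^2 / D \<le> 2*U^2/n"
  proof -
    have "2 * U^2/n^2 / D = (2*U^2/n) * (1 / (n * D))" using n Dpos by (simp add: field_simps power2_eq_square)
    also have "\<dots> \<le> (2*U^2/n) * 1"
    proof (rule mult_left_mono)
      have "n * D \<ge> 1" using D n unfolding D_def by (simp add: field_simps)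
      then show "1 / (n * D) \<le> 1" by simp
    qed (use n in simp)
    finally show ?thesis by simp
  qed
  finally show ?thesis by simp
qed


lemma prod_one_minus:
  fixes a :: "nat \<Rightarrow> real"
  assumes "finite J" "\<And>j. j\<in>J \<Longrightarrow> 0 \<le> a j \<and> a j \<le> 1"
  shows "1 - (\<Sum>j\<in>J. a j) \<le> (\<Prod>j\<in>J. 1 - a j) \<and> (\<Prod>j\<in>J. 1 - a j) \<le> 1 \<and> 0 \<le> (\<Prod>j\<in>J. 1 - a j)"
  using assms
proof (induction J rule: finite_induct)
  case (insert x F)
  let ?P = "\<Prod>j\<in>F. 1 - a j" and ?S = "\<Sum>j\<in>F. a j"
  have IH: "1 - ?S \<le> ?P" "?P \<le> 1" "0 \<le> ?P" using insert by auto
  have ax: "0 \<le> a x" "a x \<le> 1" using insert by auto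
  have S0: "0 \<le> ?S" using insert by (intro sum_nonneg) auto
  have "(1 - a x) * (1 - ?S) \<le> (1 - a x) * ?P" using IH ax by (intro mult_left_mono) auto
  moreover have "1 - (a x + ?S) \<le> (1 - a x) * (1 - ?S)" using ax S0 by (simp add: algebra_simps)
  moreover have "(1 - a x) * ?P \<le> 1" using IH ax by (simp add: mult_le_one)
  moreover have "0 \<le> (1 - a x) * ?P" using IH ax by simp
  ultimately show ?case using insert by simp
qed simp


definition T :: "nat set \<Rightarrow> nat \<Rightarrow> (nat \<Rightarrow> nat) stream \<Rightarrow> nat" where
  "T A i \<omega> = (LEAST t. A \<subseteq> {(\<omega> !! j) i | j. j < t})"

lemma T_alt: "T A i \<omega> = (LEAST t. \<forall>a\<in>A. \<exists>j\<in>{..<t}. (\<omega> !! j) i = a)"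
  unfolding T_def by (intro arg_cong[where f=Least] ext) auto

lemma pred_comp_pmf[measurable]:
  "Measurable.pred (stream_space (measure_pmf p)) (\<lambda>\<omega>. (\<omega> !! j) i = a)"
proof -
  have "(\<lambda>x. x i = a) \<in> measurable (measure_pmf p) (count_space UNIV)" by simp
  from measurable_compose[OF measurable_snth this] show ?thesis by (simp add: o_def)
qed

lemma meas_T[measurable]: "T A i \<in> measurable (stream_space (measure_pmf p)) (count_space UNIV)"
  unfolding T_alt by measurable

lemma prob_step:
  assumes "n \<ge> 1"
  shows "measure_pmf.prob (step_pmf n k) {x. \<forall>j<k. x j \<in> B j} = (\<Prod>j<k. real (card ({..<n} \<inter> B j)) / n)"
proof -
  have "{x. \<forall>j<k. x j \<in> B j} = Pi {..<k} B" by (auto simp: Pi_def)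
  moreover have "{..<n} \<noteq> {}" using assms by (cases n) auto
  ultimately show ?thesis unfolding step_pmf_def
    by (simp add: measure_Pi_pmf_Pi measure_pmf_of_set)
qed

lemma prob_step_one:
  assumes "n \<ge> 1" "i < k"
  shows "measure_pmf.prob (step_pmf n k) {x. x i \<in> C} = real (card ({..<n} \<inter> C)) / n"
proof -
  define B where "B = (\<lambda>j. if j = i then C else UNIV)"
  have "{x. x i \<in> C} = {x. \<forall>j<k. x j \<in> B j}" using assms by (auto simp: B_def)
  then have "measure_pmf.prob (step_pmf n k) {x. x i \<in> C} = (\<Prod>j<k. real (card ({..<n} \<inter> B j)) / n)"
    using prob_step[OF assms(1)] by simp
  also have "\<dots> = (\<Prod>j<k. if j = i then real (card ({..<n} \<inter> C)) / n else 1)"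
    using assms by (intro prod.cong) (auto simp: B_def)
  also have "\<dots> = real (card ({..<n} \<inter> C)) / n" using assms by (simp add: prod.delta)
  finally show ?thesis .
qed

lemma never_null:
  assumes "n \<ge> 1" "i < k" "a < n"
  shows "AE \<omega> in coupon_space n k. \<exists>j. (\<omega> !! j) i = a"
proof -
  let ?S = "coupon_space n k"
  interpret S: prob_space ?S unfolding coupon_space_def by (rule prob_space.prob_space_stream_space[OF prob_space_measure_pmf])
  define q where "q = \<P>(\<omega> in ?S. \<forall>j. (\<omega> !! j) i \<noteq> a)"
  have "ennreal q = (\<integral>\<^sup>+t. \<P>(\<omega> in ?S. \<forall>j. ((t ## \<omega>) !! j) i \<noteq> a) \<partial>measure_pmf (step_pmf n k))"
    unfolding q_def coupon_space_def by (rule prob_space.prob_stream_space[OF prob_space_measure_pmf]) measurable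
  also have "\<dots> = (\<integral>\<^sup>+t. ennreal q * indicator {t. t i \<in> -{a}} t \<partial>measure_pmf (step_pmf n k))"
  proof (intro nn_integral_cong)
    fix t
    have "(\<forall>j. ((t ## \<omega>) !! j) i \<noteq> a) \<longleftrightarrow> t i \<noteq> a \<and> (\<forall>j. (\<omega> !! j) i \<noteq> a)" for \<omega>
      by (auto simp: Stream_snth split: nat.splits)
    then show "ennreal \<P>(\<omega> in ?S. \<forall>j. ((t ## \<omega>) !! j) i \<noteq> a) = ennreal q * indicator {t. t i \<in> -{a}} t"
      unfolding q_def by (auto simp: indicator_def)
  qed
  also have "\<dots> = ennreal q * emeasure (measure_pmf (step_pmf n k)) {t. t i \<in> -{a}}"
    by (simp add: nn_integral_cmult_indicator)
  also have "\<dots> = ennreal (q * ((n - 1) / n))"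
  proof -
    have "card ({..<n} \<inter> -{a}) = n - 1" using assms by (simp add: Diff_eq[symmetric])
    then have "emeasure (measure_pmf (step_pmf n k)) {t. t i \<in> -{a}} = ennreal ((n - 1) / n)"
      using prob_step_one[OF assms(1,2), of "-{a}"] assms
      by (simp add: measure_pmf.emeasure_eq_measure of_nat_diff)
    moreover have "q \<ge> 0" by (simp add: q_def)
    moreover have "(n - 1) / n \<ge> (0::real)" using assms by simp
    ultimately show ?thesis by (metis ennreal_mult)
  qed
  finally have eq: "q = q * ((n - 1) / n)"
    using S.prob_space_axioms by (simp add: q_def)
  have "q = 0"
  proof -
    have "q * (1 - (n-1)/n) = 0" using eq by (simp add: algebra_simps)
    moreover have "1 - (n-1)/n \<noteq> (0::real)" using assms by (simp add: field_simps)
    ultimately show ?thesis by (metis mult_eq_0_iff)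
  qed
  have "{\<omega>\<in>space ?S. \<forall>j. (\<omega> !! j) i \<noteq> a} \<in> sets ?S"
    unfolding coupon_space_def by measurable
  then have "AE x in ?S. x \<notin> {\<omega>\<in>space ?S. \<forall>j. (\<omega> !! j) i \<noteq> a}"
    using S.prob_eq_0 \<open>q = 0\<close> unfolding q_def by blast
  then show ?thesis by eventually_elim (auto simp: coupon_space_def space_stream_space)
qed

definition good :: "nat \<Rightarrow> (nat \<Rightarrow> nat set) \<Rightarrow> (nat \<Rightarrow> nat) stream \<Rightarrow> bool" where
  "good k A \<omega> = (\<forall>i<k. \<forall>a\<in>A i. \<exists>j. (\<omega> !! j) i = a)"

lemma T_exists:
  assumes "finite A" "\<forall>a\<in>A. \<exists>j. (\<omega> !! j) i = a"
  shows "\<exists>t. A \<subseteq> {(\<omega> !! j) i | j. j < t}"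
proof -
  obtain f where f: "\<forall>a\<in>A. (\<omega> !! f a) i = a" using bchoice[OF assms(2)] by blast
  have "\<forall>a\<in>A. f a < Suc (Max (f ` A))" using assms(1) by (auto intro!: le_imp_less_Suc Max_ge)
  then have "A \<subseteq> {(\<omega> !! j) i | j. j < Suc (Max (f ` A))}"
  proof (intro subsetI CollectI)
    fix a assume "a \<in> A" "\<forall>a\<in>A. f a < Suc (Max (f ` A))"
    then show "\<exists>j. a = (\<omega> !! j) i \<and> j < Suc (Max (f ` A))"
      using f by (intro exI[of _ "f a"]) auto
  qed
  then show ?thesis by blast
qed

lemma T_empty[simp]: "T {} i \<omega> = 0"
  unfolding T_def by simp

lemma T_zero_iff:
  assumes "finite A" "\<forall>a\<in>A. \<exists>j. (\<omega> !! j) i = a"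
  shows "T A i \<omega> = 0 \<longleftrightarrow> A = {}"
proof
  assume "T A i \<omega> = 0"
  moreover have "A \<subseteq> {(\<omega> !! j) i | j. j < T A i \<omega>}"
    unfolding T_def using T_exists[OF assms] by (rule LeastI_ex)
  ultimately show "A = {}" by simp
next
  assume "A = {}" then show "T A i \<omega> = 0" by simp
qed

lemma set_Suc_split: "{f j | j. j < Suc t} = insert (f 0) {f (Suc j) | j. j < t}"
proof -
  have "{f j | j. j < Suc t} = f ` {..<Suc t}" by auto
  also have "\<dots> = insert (f 0) ((\<lambda>j. f (Suc j)) ` {..<t})"
    by (simp add: lessThan_Suc_eq_insert_0 image_image)
  also have "(\<lambda>j. f (Suc j)) ` {..<t} = {f (Suc j) | j. j < t}" by auto
  finally show ?thesis .
qed

lemma snth_Cons_set: "{((x ## \<omega>) !! j) i | j. j < Suc t} = insert (x i) {(\<omega> !! j) i | j. j < t}"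
  using set_Suc_split[of "\<lambda>j. ((x ## \<omega>) !! j) i" t] by simp

lemma T_Cons:
  assumes "finite A" "\<forall>a\<in>A. \<exists>j. (\<omega> !! j) i = a" "A \<noteq> {}"
  shows "T A i (x ## \<omega>) = Suc (T (A - {x i}) i \<omega>)"
proof -
  obtain t where t: "A - {x i} \<subseteq> {(\<omega> !! j) i | j. j < t}"
    using T_exists[of "A - {x i}" \<omega> i] assms by auto
  have eq: "A \<subseteq> {((x ## \<omega>) !! j) i | j. j < Suc m} \<longleftrightarrow> A - {x i} \<subseteq> {(\<omega> !! j) i | j. j < m}" for m
    unfolding snth_Cons_set by blast
  have "T A i (x ## \<omega>) = Suc (LEAST m. A \<subseteq> {((x ## \<omega>) !! j) i | j. j < Suc m})"
    unfolding T_def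
  proof (rule Least_Suc)
    show "A \<subseteq> {((x ## \<omega>) !! j) i | j. j < Suc t}" using eq t by blast
    show "\<not> A \<subseteq> {((x ## \<omega>) !! j) i | j. j < 0}" using assms(3) by simp
  qed
  also have "\<dots> = Suc (T (A - {x i}) i \<omega>)" unfolding T_def eq ..
  finally show ?thesis .
qed

definition Ev :: "nat \<Rightarrow> (nat \<Rightarrow> nat set) \<Rightarrow> (nat \<Rightarrow> nat) stream \<Rightarrow> bool" where
  "Ev k A \<omega> = (\<forall>i<k. T (A i) i \<omega> \<le> T (A 0) 0 \<omega>)"

definition F :: "nat \<Rightarrow> nat \<Rightarrow> (nat \<Rightarrow> nat set) \<Rightarrow> real" where
  "F n k A = \<P>(\<omega> in coupon_space n k. Ev k A \<omega>)"

lemma pred_le_nat: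
  assumes "f \<in> measurable M (count_space UNIV)" "g \<in> measurable M (count_space (UNIV::nat set))"
  shows "Measurable.pred M (\<lambda>x. f x \<le> g x)"
proof -
  have "(\<lambda>x. (f x, g x)) \<in> measurable M (count_space UNIV \<Otimes>\<^sub>M count_space UNIV)"
    using assms by (intro measurable_Pair) 
  then have "(\<lambda>x. (f x, g x)) \<in> measurable M (count_space UNIV)"
    by (simp add: pair_measure_countable)
  then show ?thesis unfolding pred_def
    using measurable_sets[of "\<lambda>x. (f x, g x)" M "count_space UNIV" "{p. fst p \<le> snd p}"]
    by (simp add: vimage_def Int_def conj_commute)
qed

lemma pred_Ev[measurable]: "Measurable.pred (coupon_space n k) (Ev k A)"
proof -
  have "Measurable.pred (coupon_space n k) (\<lambda>\<omega>. T (A i) i \<omega> \<le> T (A 0) 0 \<omega>)" for i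
    by (rule pred_le_nat) (simp_all add: coupon_space_def)
  then show ?thesis unfolding Ev_def by (intro pred_intros_countable pred_intros_logic) auto
qed

lemma Ev_Cons:
  assumes "0 < k" "\<forall>i<k. finite (A i)" "good k A \<omega>" "A 0 \<noteq> {}"
  shows "Ev k A (x ## \<omega>) \<longleftrightarrow> Ev k (\<lambda>i. A i - {x i}) \<omega>"
proof -
  have T0: "T (A 0) 0 (x ## \<omega>) = Suc (T (A 0 - {x 0}) 0 \<omega>)"
    using assms by (intro T_Cons) (auto simp: good_def)
  have "T (A i) i (x ## \<omega>) \<le> T (A 0) 0 (x ## \<omega>) \<longleftrightarrow> T (A i - {x i}) i \<omega> \<le> T (A 0 - {x 0}) 0 \<omega>"
    if "i < k" for i
  proof (cases "A i = {}")
    case True then show ?thesis by (simp add: T0)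
  next
    case False
    then have "T (A i) i (x ## \<omega>) = Suc (T (A i - {x i}) i \<omega>)"
      using assms that by (intro T_Cons) (auto simp: good_def)
    then show ?thesis by (simp add: T0)
  qed
  then show ?thesis unfolding Ev_def by auto
qed

lemma Ev_base:
  assumes "\<forall>i<k. finite (A i)" "good k A \<omega>" "A 0 = {}"
  shows "Ev k A \<omega> \<longleftrightarrow> (\<forall>i<k. A i = {})"
proof -
  have *: "T (A i) i \<omega> = 0 \<longleftrightarrow> A i = {}" if "i < k" for i
    using assms that by (intro T_zero_iff) (auto simp: good_def)
  show ?thesis unfolding Ev_def assms(3) T_empty using * by auto
qed


lemma AE_good:
  assumes "n \<ge> 1" "\<forall>i<k. A i \<subseteq> {..<n}"
  shows "AE \<omega> in coupon_space n k. good k A \<omega>"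
proof -
  have "AE \<omega> in coupon_space n k. \<forall>i\<in>{..<k}. \<forall>a\<in>A i. \<exists>j. (\<omega> !! j) i = a"
  proof (subst AE_ball_countable, simp, intro ballI)
    fix i assume i: "i \<in> {..<k}"
    show "AE \<omega> in coupon_space n k. \<forall>a\<in>A i. \<exists>j. (\<omega> !! j) i = a"
    proof (subst AE_ball_countable, simp, intro ballI)
      fix a assume "a \<in> A i"
      then show "AE \<omega> in coupon_space n k. \<exists>j. (\<omega> !! j) i = a"
        using assms i by (intro never_null) auto
    qed
  qed
  then show ?thesis unfolding good_def by (rule eventually_mono) auto
qed

lemma prob_space_coupon: "prob_space (coupon_space n k)"
  unfolding coupon_space_def by (rule prob_space.prob_space_stream_space[OF prob_space_measure_pmf])

lemma F_nonneg: "0 \<le> F n k A" unfolding F_def by simp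

lemma F_le_1: "F n k A \<le> 1"
  unfolding F_def using prob_space.prob_le_1[OF prob_space_coupon] by blast

lemma F_base:
  assumes "n \<ge> 1" "\<forall>i<k. A i \<subseteq> {..<n}" "A 0 = {}"
  shows "F n k A = (if \<forall>i<k. A i = {} then 1 else 0)"
proof -
  interpret S: prob_space "coupon_space n k" by (rule prob_space_coupon)
  have fin: "\<forall>i<k. finite (A i)" using assms(2) finite_subset by blast
  have "F n k A = measure (coupon_space n k) {\<omega>\<in>space (coupon_space n k). \<forall>i<k. A i = {}}"
    unfolding F_def
  proof (rule measure_eq_AE)
    show "AE x in coupon_space n k. (x \<in> {\<omega> \<in> space (coupon_space n k). Ev k A \<omega>}) =
          (x \<in> {\<omega> \<in> space (coupon_space n k). \<forall>i<k. A i = {}})"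
      using AE_good[OF assms(1,2)] by eventually_elim (use Ev_base[OF fin _ assms(3)] in auto)
  qed measurable
  then show ?thesis by (cases "\<forall>i<k. A i = {}") (simp_all add: S.prob_space)
qed

lemma F_rec:
  assumes "n \<ge> 1" "0 < k" "\<forall>i<k. A i \<subseteq> {..<n}" "A 0 \<noteq> {}"
  shows "F n k A = measure_pmf.expectation (step_pmf n k) (\<lambda>x. F n k (\<lambda>i. A i - {x i}))"
proof -
  interpret S: prob_space "coupon_space n k" by (rule prob_space_coupon)
  have fin: "\<forall>i<k. finite (A i)" using assms(3) finite_subset by blast
  have "ennreal (F n k A) = (\<integral>\<^sup>+t. \<P>(\<omega> in coupon_space n k. Ev k A (t ## \<omega>)) \<partial>measure_pmf (step_pmf n k))"
    unfolding F_def coupon_space_def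
    by (rule prob_space.prob_stream_space[OF prob_space_measure_pmf])
       (use pred_Ev[where n=n and k=k and A=A, unfolded coupon_space_def] in \<open>simp add: pred_def\<close>)
  also have "\<dots> = (\<integral>\<^sup>+t. ennreal (F n k (\<lambda>i. A i - {t i})) \<partial>measure_pmf (step_pmf n k))"
  proof (intro nn_integral_cong)
    fix t
    have "\<P>(\<omega> in coupon_space n k. Ev k A (t ## \<omega>)) = F n k (\<lambda>i. A i - {t i})"
      unfolding F_def
    proof (rule measure_eq_AE)
      show "AE x in coupon_space n k. (x \<in> {\<omega> \<in> space (coupon_space n k). Ev k A (t ## \<omega>)}) =
          (x \<in> {\<omega> \<in> space (coupon_space n k). Ev k (\<lambda>i. A i - {t i}) \<omega>})"
        using AE_good[OF assms(1,3)] by eventually_elim (use Ev_Cons[OF assms(2) fin _ assms(4)] in auto)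
      have "(\<lambda>\<omega>. t ## \<omega>) \<in> measurable (coupon_space n k) (coupon_space n k)"
        unfolding coupon_space_def by measurable
      then show "{\<omega> \<in> space (coupon_space n k). Ev k A (t ## \<omega>)} \<in> sets (coupon_space n k)"
        using pred_Ev[where n=n and k=k and A=A] by (simp add: pred_def measurable_compose[where f="\<lambda>\<omega>. t ## \<omega>" and g="Ev k A"] )
    qed measurable
    then show "ennreal \<P>(\<omega> in coupon_space n k. Ev k A (t ## \<omega>)) = ennreal (F n k (\<lambda>i. A i - {t i}))"
      by simp
  qed
  also have "\<dots> = ennreal (measure_pmf.expectation (step_pmf n k) (\<lambda>x. F n k (\<lambda>i. A i - {x i})))"
  proof (rule nn_integral_eq_integral)
    show "integrable (measure_pmf (step_pmf n k)) (\<lambda>x. F n k (\<lambda>i. A i - {x i}))"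
      by (rule measure_pmf.integrable_const_bound[where B=1]) (auto simp: F_nonneg F_le_1)
  qed (simp add: F_nonneg)
  finally show ?thesis
    using F_nonneg by (simp add: ennreal_inj integral_nonneg_AE)
qed


lemma F_cong:
  assumes "0 < k" "\<forall>i<k. A i = B i"
  shows "F n k A = F n k B"
proof -
  have "Ev k A = Ev k B" using assms by (intro ext) (simp add: Ev_def)
  then show ?thesis unfolding F_def by simp
qed

lemma finite_set_step: "n \<ge> 1 \<Longrightarrow> finite (set_pmf (step_pmf n k))"
  unfolding step_pmf_def by (subst set_Pi_pmf) (auto simp: set_pmf_of_set lessThan_empty_iff)

lemma integrable_step[simp]: "n \<ge> 1 \<Longrightarrow> integrable (measure_pmf (step_pmf n k)) (f :: _ \<Rightarrow> real)"
  by (rule integrable_measure_pmf_finite[OF finite_set_step])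

lemma F_decomp:
  assumes n: "n \<ge> 1" and k: "0 < k" and A: "\<forall>i<k. A i \<subseteq> {..<n}" and A0: "A 0 \<noteq> {}"
  defines "pN \<equiv> (\<Prod>j<k. (real n - real (card (A j))) / real n)"
  and "c \<equiv> (\<lambda>i. \<Prod>j<k. if j = i then 1 / real n else (real n - real (card (A j))) / real n)"
  shows "\<exists>IM pM. F n k A = F n k A * pN + (\<Sum>i<k. c i * (\<Sum>a\<in>A i. F n k (A(i := A i - {a})))) + IM
     \<and> 1 = pN + (\<Sum>i<k. c i * real (card (A i))) + pM \<and> 0 \<le> IM \<and> IM \<le> pM"
proof -
  let ?\<mu> = "measure_pmf (step_pmf n k)"
  define h where "h x = F n k (\<lambda>i. A i - {x i})" for x :: "nat \<Rightarrow> nat"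
  define N where "N = {x::nat\<Rightarrow>nat. \<forall>j<k. x j \<notin> A j}"
  define Sg where "Sg i a = {x::nat\<Rightarrow>nat. x i = a \<and> (\<forall>j<k. j \<noteq> i \<longrightarrow> x j \<notin> A j)}" for i a
  define M where "M = {x. x \<notin> N \<and> (\<forall>i<k. \<forall>a\<in>A i. x \<notin> Sg i a)}"
  define FA where "FA i a = F n k (A(i := A i - {a}))" for i a
  have fin: "finite (A i)" if "i < k" for i using A that finite_subset by blast
  have cardle: "card (A i) \<le> n" if "i < k" for i
    using card_mono[OF finite_lessThan, of "A i" n] A that by simp
  have decomp: "\<phi> x = zz * indicator N x + (\<Sum>i<k. \<Sum>a\<in>A i. cS i a * indicator (Sg i a) x) + \<phi> x * indicator M x"
    if h0: "\<forall>y\<in>N. \<phi> y = zz" and hS: "\<forall>i<k. \<forall>a\<in>A i. \<forall>y\<in>Sg i a. \<phi> y = cS i a"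
    for \<phi> :: "(nat \<Rightarrow> nat) \<Rightarrow> real" and zz cS x
  proof (cases "x \<in> N")
    case True
    then have "x \<notin> Sg i a" if "i < k" "a \<in> A i" for i a using that by (auto simp: N_def Sg_def)
    moreover have "x \<notin> M" using True by (auto simp: M_def)
    ultimately show ?thesis using True h0 by simp
  next
    case False
    show ?thesis
    proof (cases "\<exists>i<k. \<exists>a\<in>A i. x \<in> Sg i a")
      case True
      then obtain i0 a0 where i0: "i0 < k" "a0 \<in> A i0" "x \<in> Sg i0 a0" by blast
      have inner: "(\<Sum>a\<in>A i. cS i a * indicator (Sg i a) x) = (if i = i0 then cS i0 a0 else 0)"
        if "i < k" for i
      proof (cases "i = i0")
        case True
        have "(\<Sum>a\<in>A i. cS i a * indicator (Sg i a) x) = (\<Sum>a\<in>A i. if a = a0 then cS i0 a0 else 0)"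
          using True i0 by (intro sum.cong) (auto simp: Sg_def indicator_def)
        also have "\<dots> = cS i0 a0" using True i0 fin[OF that] by simp
        finally show ?thesis using True by simp
      next
        case False
        have "(\<Sum>a\<in>A i. cS i a * indicator (Sg i a) x) = (\<Sum>a\<in>A i. 0)"
          using False i0 that by (intro sum.cong) (auto simp: Sg_def indicator_def)
        then show ?thesis using False by simp
      qed
      have "(\<Sum>i<k. \<Sum>a\<in>A i. cS i a * indicator (Sg i a) x) = (\<Sum>i<k. if i = i0 then cS i0 a0 else 0)"
        using inner by (intro sum.cong) auto
      also have "\<dots> = cS i0 a0" using i0 by simp
      finally have "(\<Sum>i<k. \<Sum>a\<in>A i. cS i a * indicator (Sg i a) x) = cS i0 a0" .
      moreover have "x \<notin> M" using i0 by (auto simp: M_def)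
      ultimately show ?thesis using False hS i0 by simp
    next
      case False2: False
      then have "x \<in> M" using False by (auto simp: M_def)
      moreover have "(\<Sum>i<k. \<Sum>a\<in>A i. cS i a * indicator (Sg i a) x) = 0"
        using False2 by (intro sum.neutral ballI) (auto simp: indicator_def)
      ultimately show ?thesis using False by simp
    qed
  qed
  have hN: "\<forall>y\<in>N. h y = F n k A"
  proof
    fix y assume "y \<in> N"
    then have "\<forall>i<k. A i - {y i} = A i" by (auto simp: N_def)
    then show "h y = F n k A" unfolding h_def using k by (intro F_cong) auto
  qed
  have hS: "\<forall>i<k. \<forall>a\<in>A i. \<forall>y\<in>Sg i a. h y = FA i a"
  proof (intro allI impI ballI)
    fix i a y assume "i < k" "a \<in> A i" "y \<in> Sg i a"
    then have "\<forall>j<k. A j - {y j} = (A(i := A i - {a})) j" by (auto simp: Sg_def)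
    then show "h y = FA i a" unfolding h_def FA_def using k by (intro F_cong) auto
  qed
  have probN: "measure ?\<mu> N = pN"
  proof -
    have Neq: "N = {x. \<forall>j<k. x j \<in> - A j}" by (auto simp: N_def)
    have "real (card ({..<n} \<inter> - A j)) = real n - real (card (A j))" if "j < k" for j
    proof -
      have "{..<n} \<inter> - A j = {..<n} - A j" by auto
      then show ?thesis using A that fin[OF that] cardle[OF that] by (simp add: card_Diff_subset of_nat_diff)
    qed
    then have "(\<Prod>j<k. real (card ({..<n} \<inter> - A j)) / n) = pN" unfolding pN_def by (intro prod.cong) auto
    then show ?thesis unfolding Neq using prob_step[OF n, of k "\<lambda>j. - A j"] by simp
  qed
  have probS: "measure ?\<mu> (Sg i a) = c i" if "i < k" "a \<in> A i" for i a
  proof -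
    have Seq: "Sg i a = {x. \<forall>j<k. x j \<in> (if j = i then {a} else - A j)}" using that by (auto simp: Sg_def)
    have "real (card ({..<n} \<inter> (if j = i then {a} else - A j))) / n = (if j = i then 1 / real n else (real n - real (card (A j))) / real n)" if "j < k" for j
    proof -
      have "{..<n} \<inter> - A j = {..<n} - A j" by auto
      moreover have "{..<n} \<inter> {a} = {a}" using A \<open>i < k\<close> \<open>a \<in> A i\<close> by auto
      ultimately show ?thesis using A that fin[OF that] cardle[OF that] by (simp add: card_Diff_subset of_nat_diff)
    qed
    then have "(\<Prod>j<k. real (card ({..<n} \<inter> (if j = i then {a} else - A j))) / n) = c i"
      unfolding c_def by (intro prod.cong) auto
    then show ?thesis unfolding Seq using prob_step[OF n, of k "\<lambda>j. if j = i then {a} else - A j"] by simp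
  qed
  define IM where "IM = measure_pmf.expectation (step_pmf n k) (\<lambda>x. h x * indicator M x)"
  define pM where "pM = measure ?\<mu> M"
  have "F n k A = measure_pmf.expectation (step_pmf n k) h"
    unfolding h_def by (rule F_rec[OF n k A A0])
  also have "\<dots> = measure_pmf.expectation (step_pmf n k) (\<lambda>x. F n k A * indicator N x + (\<Sum>i<k. \<Sum>a\<in>A i. FA i a * indicator (Sg i a) x) + h x * indicator M x)"
    using decomp[OF hN hS] by simp
  also have "\<dots> = F n k A * pN + (\<Sum>i<k. \<Sum>a\<in>A i. FA i a * c i) + IM"
    using probN probS unfolding IM_def using n by (simp add: integral_sum)
  finally have eq1: "F n k A = F n k A * pN + (\<Sum>i<k. c i * (\<Sum>a\<in>A i. F n k (A(i := A i - {a})))) + IM"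
    by (simp add: FA_def sum_distrib_left mult.commute)
  have "1 = measure_pmf.expectation (step_pmf n k) (\<lambda>x. 1 :: real)" by simp
  also have "\<dots> = measure_pmf.expectation (step_pmf n k) (\<lambda>x. 1 * indicator N x + (\<Sum>i<k. \<Sum>a\<in>A i. 1 * indicator (Sg i a) x) + 1 * indicator M x)"
    using decomp[where \<phi>="\<lambda>_. 1::real" and zz=1 and cS="\<lambda>_ _. 1"] by simp
  also have "\<dots> = pN + (\<Sum>i<k. \<Sum>a\<in>A i. c i) + pM"
    using probN probS unfolding pM_def using n by (simp add: integral_sum)
  finally have eq2: "1 = pN + (\<Sum>i<k. c i * real (card (A i))) + pM" by (simp add: mult.commute)
  have IM0: "0 \<le> IM" unfolding IM_def h_def by (simp add: F_nonneg)
  have IM1: "IM \<le> pM"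
  proof -
    have "IM \<le> measure_pmf.expectation (step_pmf n k) (\<lambda>x. indicator M x)"
      unfolding IM_def h_def using n by (intro integral_mono) (auto simp: F_le_1 indicator_def)
    then show ?thesis by (simp add: pM_def)
  qed
  show ?thesis using eq1 eq2 IM0 IM1 by blast
qed


definition gval :: "nat \<Rightarrow> (nat \<Rightarrow> nat set) \<Rightarrow> real" where
  "gval k A = (if (\<Sum>i<k. card (A i)) = 0 then 1 else real (card (A 0)) / real (\<Sum>i<k. card (A i)))"

lemma card_remove_sum:
  fixes A :: "nat \<Rightarrow> nat set"
  assumes "i < k" "a \<in> A i" "finite (A i)"
  shows "(\<Sum>j<k. card ((A(i := A i - {a})) j)) + 1 = (\<Sum>j<k. card (A j))"
proof -
  have r1: "(\<Sum>j<k. card (A j)) = card (A i) + (\<Sum>j\<in>{..<k}-{i}. card (A j))"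
    using assms by (simp add: sum.remove)
  have r2: "(\<Sum>j<k. card ((A(i := A i - {a})) j)) = card (A i - {a}) + (\<Sum>j\<in>{..<k}-{i}. card ((A(i := A i - {a})) j))"
    using assms by (subst sum.remove[of _ i]) auto
  have r3: "(\<Sum>j\<in>{..<k}-{i}. card ((A(i := A i - {a})) j)) = (\<Sum>j\<in>{..<k}-{i}. card (A j))"
    by (intro sum.cong) auto
  have r4: "card (A i - {a}) + 1 = card (A i)"
  proof -
    have "card (A i) > 0" using assms card_gt_0_iff by blast
    then show ?thesis using assms by (simp add: card_Diff_singleton)
  qed
  show ?thesis using r1 r2 r3 r4 by simp
qed

lemma sum_card_ge:
  fixes A :: "nat \<Rightarrow> nat set"
  assumes "i < k" "\<forall>j<k. finite (A j)"
  shows "card (A i) \<le> (\<Sum>j<k. card (A j))"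
  using assms by (intro member_le_sum) auto

lemma sum_card_ge2:
  fixes A :: "nat \<Rightarrow> nat set"
  assumes "i < k" "0 < i" "\<forall>j<k. finite (A j)"
  shows "card (A 0) + card (A i) \<le> (\<Sum>j<k. card (A j))"
proof -
  have "card (A 0) + card (A i) = (\<Sum>j\<in>{0, i}. card (A j))" using assms by simp
  also have "\<dots> \<le> (\<Sum>j<k. card (A j))" using assms by (intro sum_mono2) auto
  finally show ?thesis .
qed


lemma cube_ineq: "2 * real m ^ 3 / real n + 2 * real (Suc m) ^ 2 / real n \<le> 2 * real (Suc m) ^ 3 / real n"
proof -
  have e1: "real (Suc m) ^ 3 = real m ^ 3 + 3 * real m ^ 2 + 3 * real m + 1"
    by (simp add: power3_eq_cube power2_eq_square algebra_simps)
  have e2: "real (Suc m) ^ 2 = real m ^ 2 + 2 * real m + 1"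
    by (simp add: power2_eq_square algebra_simps)
  have "2 * real m ^ 3 + 2 * real (Suc m) ^ 2 \<le> 2 * real (Suc m) ^ 3"
    using e1 e2 by (simp add: algebra_simps)
  then have "(2 * real m ^ 3 + 2 * real (Suc m) ^ 2) / real n \<le> 2 * real (Suc m) ^ 3 / real n"
    by (intro divide_right_mono) auto
  then show ?thesis by (simp add: add_divide_distrib)
qed

lemma F_approx:
  assumes n: "n \<ge> 1" and k: "0 < k"
  shows "\<forall>A. (\<forall>i<k. A i \<subseteq> {..<n}) \<longrightarrow> (\<Sum>i<k. card (A i)) = m \<longrightarrow>
           \<bar>F n k A - gval k A\<bar> \<le> 2 * real m ^ 3 / real n"
proof (induction m)
  case 0
  show ?case
  proof (intro allI impI)
    fix A :: "nat \<Rightarrow> nat set"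
    assume A: "\<forall>i<k. A i \<subseteq> {..<n}" and s: "(\<Sum>i<k. card (A i)) = 0"
    have fin: "\<forall>i<k. finite (A i)" using A finite_subset by blast
    have "\<forall>i<k. A i = {}" using s fin by simp
    then show "\<bar>F n k A - gval k A\<bar> \<le> 2 * real 0 ^ 3 / real n"
      using F_base[OF n A] k s by (simp add: gval_def)
  qed
next
  case (Suc m)
  show ?case
  proof (intro allI impI)
    fix A :: "nat \<Rightarrow> nat set"
    assume A: "\<forall>i<k. A i \<subseteq> {..<n}" and s: "(\<Sum>i<k. card (A i)) = Suc m"
    have fin: "\<forall>i<k. finite (A i)" using A finite_subset by blast
    have cardle: "card (A i) \<le> n" if "i < k" for i
      using card_mono[OF finite_lessThan, of "A i" n] A that by simp
    show "\<bar>F n k A - gval k A\<bar> \<le> 2 * real (Suc m) ^ 3 / real n"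
    proof (cases "A 0 = {}")
      case True
      have "\<not> (\<forall>i<k. A i = {})"
      proof
        assume "\<forall>i<k. A i = {}"
        then have "(\<Sum>i<k. card (A i)) = 0" by simp
        with s show False by simp
      qed
      then have "F n k A = 0" using F_base[OF n A True] by simp
      moreover have "gval k A = 0" using True s by (simp add: gval_def)
      ultimately show ?thesis by simp
    next
      case A0: False
      define pN where "pN = (\<Prod>j<k. (real n - real (card (A j))) / real n)"
      define c where "c = (\<lambda>i. \<Prod>j<k. if j = i then 1 / real n else (real n - real (card (A j))) / real n)"
      obtain IM pM where dec:
        "F n k A = F n k A * pN + (\<Sum>i<k. c i * (\<Sum>a\<in>A i. F n k (A(i := A i - {a})))) + IM"
        "1 = pN + (\<Sum>i<k. c i * real (card (A i))) + pM" "0 \<le> IM" "IM \<le> pM"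
        using F_decomp[OF n k A A0] unfolding pN_def c_def by blast
      define u where "u = (\<lambda>i. real (card (A i)))"
      define U where "U = real (Suc m)"
      define gi where "gi = (\<lambda>i::nat. if m = 0 then 1 else (real (card (A 0)) - (if i = 0 then 1 else 0)) / real m)"
      define SF where "SF = (\<lambda>i. \<Sum>a\<in>A i. F n k (A(i := A i - {a})))"
      define \<epsilon> where "\<epsilon> = 2 * real m ^ 3 / real n"
      have npos: "real n > 0" using n by simp
      have u0: "card (A 0) \<ge> 1" using A0 fin k by (simp add: Suc_le_eq card_gt_0_iff)
      have U_sum: "U = (\<Sum>i<k. u i)" unfolding U_def u_def using s by (metis of_nat_sum)
      have uj: "0 \<le> u j / n \<and> u j / n \<le> 1" if "j < k" for j
        using cardle[OF that] npos by (simp add: u_def)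
      have one_minus: "(real n - real (card (A j))) / real n = 1 - u j / n" for j
        using npos by (simp add: u_def diff_divide_distrib)
      have sum_le_U: "(\<Sum>j\<in>J. u j / n) \<le> U / n" if "J \<subseteq> {..<k}" for J
      proof -
        have "(\<Sum>j\<in>J. u j / n) \<le> (\<Sum>j<k. u j / n)"
          using that by (intro sum_mono2) (auto simp: u_def)
        also have "\<dots> = U / n" using U_sum by (simp add: sum_divide_distrib)
        finally show ?thesis .
      qed
      have gval_rem: "gval k (A(i := A i - {a})) = gi i" if "i < k" "a \<in> A i" for i a
      proof -
        have sm: "(\<Sum>j<k. card ((A(i := A i - {a})) j)) = m"
          using card_remove_sum[of i k a A] fin that s by simp
        have c0: "real (card ((A(i := A i - {a})) 0)) = real (card (A 0)) - (if i = 0 then 1 else 0)"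
        proof (cases "i = 0")
          case True
          then have "card (A 0) > 0" using u0 by simp
          then show ?thesis using True that fin by (simp add: card_Diff_singleton of_nat_diff)
        qed simp
        show ?thesis unfolding gval_def sm gi_def c0 by simp
      qed
      have IH: "\<bar>F n k (A(i := A i - {a})) - gi i\<bar> \<le> \<epsilon>" if "i < k" "a \<in> A i" for i a
      proof -
        have "\<forall>j<k. (A(i := A i - {a})) j \<subseteq> {..<n}" using A by auto
        moreover have "(\<Sum>j<k. card ((A(i := A i - {a})) j)) = m"
          using card_remove_sum[of i k a A] fin that s by simp
        ultimately show ?thesis using Suc.IH gval_rem[OF that] unfolding \<epsilon>_def by metis
      qed
      have SF: "\<bar>SF i - u i * gi i\<bar> \<le> u i * \<epsilon>" if "i \<in> {..<k}" for i
      proof -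
        have "SF i - u i * gi i = (\<Sum>a\<in>A i. F n k (A(i := A i - {a})) - gi i)"
          unfolding SF_def u_def by (simp add: sum_subtractf)
        then have "\<bar>SF i - u i * gi i\<bar> \<le> (\<Sum>a\<in>A i. \<bar>F n k (A(i := A i - {a})) - gi i\<bar>)"
          by (simp add: sum_abs)
        also have "\<dots> \<le> (\<Sum>a\<in>A i. \<epsilon>)" using IH that by (intro sum_mono) auto
        also have "\<dots> = u i * \<epsilon>" by (simp add: u_def)
        finally show ?thesis .
      qed
      have gi_b: "0 \<le> gi i \<and> gi i \<le> 1" if "i \<in> {..<k}" "u i \<noteq> 0" for i
      proof (cases "m = 0")
        case False
        have "card (A 0) - (if i = 0 then 1 else 0) \<le> m"
        proof (cases "i = 0")
          case True then show ?thesis using sum_card_ge[OF k fin] s by simp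
        next
          case False
          have "card (A i) \<ge> 1" using that by (simp add: u_def)
          then show ?thesis using sum_card_ge2[of i k A] that False fin s by simp
        qed
        then have "real (card (A 0)) - (if i = 0 then 1 else 0) \<le> real m" using u0 by (auto split: if_splits)
        then show ?thesis using False u0 unfolding gi_def by auto
      qed (simp add: gi_def)
      have gval_A: "gval k A = real (card (A 0)) / U" unfolding gval_def U_def using s by simp
      have g_b: "0 \<le> gval k A" "gval k A \<le> 1"
        using gval_A sum_card_ge[OF k fin] s by (auto simp: U_def)
      have gsum: "(\<Sum>i<k. u i * gi i) = U * gval k A"
      proof (cases "m = 0")
        case True
        have "card (A 0) = 1" using sum_card_ge[OF k fin] s u0 True by simp
        then show ?thesis using True U_sum gval_A by (simp add: gi_def U_def)
      next
        case False
        have "(\<Sum>i<k. u i * gi i) = (\<Sum>i<k. (u i * u 0 - (if i = 0 then u 0 else 0)) / real m)"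
          unfolding gi_def using False by (intro sum.cong) (auto simp: u_def algebra_simps diff_divide_distrib)
        also have "\<dots> = (\<Sum>i<k. u i * u 0 - (if i = 0 then u 0 else 0)) / real m"
          by (simp only: sum_divide_distrib)
        also have "\<dots> = (U * u 0 - u 0) / real m"
          using k U_sum by (simp add: sum_subtractf sum_distrib_right)
        also have "\<dots> = u 0" using False by (simp add: U_def field_simps)
        also have "\<dots> = U * gval k A" using gval_A by (simp add: U_def u_def)
        finally show ?thesis .
      qed
      have c_b: "1/n - U/n^2 \<le> c i \<and> c i \<le> 1/n \<and> 0 \<le> c i" if "i \<in> {..<k}" for i
      proof -
        define P where "P = (\<Prod>j\<in>{..<k}-{i}. 1 - u j / n)"
        have "c i = (1 / n) * P"
          unfolding c_def P_def using that
          by (subst prod.remove[of _ i]) (auto simp: one_minus intro!: prod.cong)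
        moreover have "1 - (\<Sum>j\<in>{..<k}-{i}. u j / n) \<le> P \<and> P \<le> 1 \<and> 0 \<le> P"
          unfolding P_def by (rule prod_one_minus) (use uj in auto)
        moreover have "(\<Sum>j\<in>{..<k}-{i}. u j / n) \<le> U / n" by (rule sum_le_U) auto
        ultimately have "1 - U/n \<le> P" "P \<le> 1" "0 \<le> P" "c i = P / n" by auto
        moreover have "(1 - U/n) / n = 1/n - U/n^2" using npos by (simp add: field_simps power2_eq_square)
        moreover have "(1 - U/n) / n \<le> P / n" "P / n \<le> 1 / n" "0 \<le> P / n"
          using \<open>1 - U/n \<le> P\<close> \<open>P \<le> 1\<close> \<open>0 \<le> P\<close> npos by (auto intro: divide_right_mono)
        ultimately show ?thesis by simp
      qed
      have pN_eq: "pN = (\<Prod>j<k. 1 - u j / n)" unfolding pN_def by (simp add: one_minus)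
      have pN_lo: "pN \<ge> 1 - U/n"
      proof -
        have "1 - (\<Sum>j<k. u j / n) \<le> pN" unfolding pN_eq by (rule prod_one_minus[THEN conjunct1]) (use uj in auto)
        moreover have "(\<Sum>j<k. u j / n) = U / n" using U_sum by (simp add: sum_divide_distrib)
        ultimately show ?thesis by simp
      qed
      have D: "1 - pN \<ge> 1/n"
      proof -
        define P where "P = (\<Prod>j\<in>{..<k}-{0}. 1 - u j / n)"
        have "pN = (1 - u 0 / n) * P" unfolding pN_eq P_def using k by (subst prod.remove[of _ 0]) auto
        moreover have "P \<le> 1" "0 \<le> P" unfolding P_def using prod_one_minus[of "{..<k}-{0}" "\<lambda>j. u j / n"] uj by auto
        moreover have "0 \<le> 1 - u 0 / n" "1 - u 0 / n \<le> 1 - 1/n" using uj[OF k] u0 npos by (auto simp: u_def divide_right_mono)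
        ultimately have "pN \<le> 1 - 1/n" by (metis mult_left_le mult_nonneg_nonneg order_trans) 
        then show ?thesis by simp
      qed
      have "\<bar>F n k A - gval k A\<bar> \<le> \<epsilon> + 2 * U^2 / n"
      proof (rule arith_core[where I="{..<k}" and c=c and u=u and SF=SF and gi=gi and pN=pN and IM=IM and pM=pM])
        show "F n k A = F n k A * pN + (\<Sum>i<k. c i * SF i) + IM" using dec(1) unfolding SF_def .
        show "1 = pN + (\<Sum>i<k. c i * u i) + pM" using dec(2) unfolding u_def .
      qed (use dec SF gi_b g_b gsum U_sum c_b D pN_lo npos in \<open>auto simp: u_def \<epsilon>_def\<close>)
      also have "\<dots> \<le> 2 * real (Suc m) ^ 3 / real n" unfolding \<epsilon>_def U_def using cube_ineq by simp
      finally show ?thesis .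
    qed
  qed
qed


theorem mainTheorem4:
  fixes k :: nat and s :: "nat \<Rightarrow> nat"
  assumes "k \<ge> 1" and "(\<Sum>i<k. s i) \<ge> 1"
  shows "(\<lambda>n. P1 n k s) \<longlonglongrightarrow> real (s 0) / real (\<Sum>i<k. s i)"
proof -
  define S where "S = (\<Sum>i<k. s i)"
  have k: "0 < k" using assms by simp
  have P1F: "P1 n k s = F n k (\<lambda>i. {..<s i})" for n
    unfolding P1_def F_def Ev_def completion_time_def T_def by (rule refl)
  have S0: "S \<noteq> 0" using assms(2) unfolding S_def by linarith
  have cs: "(\<Sum>i<k. card {..<s i}) = S" by (simp add: S_def)
  have gv: "gval k (\<lambda>i. {..<s i}) = real (s 0) / real S"
    unfolding gval_def cs using S0 by simp
  have bound: "\<bar>P1 n k s - real (s 0) / real S\<bar> \<le> 2 * real S ^ 3 / real n" if "n \<ge> Suc S" for n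
  proof -
    have n: "n \<ge> 1" using that by simp
    have "\<forall>i<k. {..<s i} \<subseteq> {..<n}"
    proof (intro allI impI)
      fix i assume "i < k"
      then have "s i \<le> S" unfolding S_def by (intro member_le_sum) auto
      then show "{..<s i} \<subseteq> {..<n}" using that by auto
    qed
    then have "\<bar>F n k (\<lambda>i. {..<s i}) - gval k (\<lambda>i. {..<s i})\<bar> \<le> 2 * real S ^ 3 / real n"
      using F_approx[OF n k, of S, rule_format, of "\<lambda>i. {..<s i}"] cs by simp
    then show ?thesis unfolding P1F gv .
  qed
  have "(\<lambda>n. P1 n k s - real (s 0) / real S) \<longlonglongrightarrow> 0"
  proof (rule Lim_null_comparison)
    show "\<forall>\<^sub>F n in sequentially. norm (P1 n k s - real (s 0) / real S) \<le> 2 * real S ^ 3 / real n"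
      unfolding eventually_sequentially real_norm_def using bound by blast
    show "(\<lambda>n. 2 * real S ^ 3 / real n) \<longlonglongrightarrow> 0" by (rule lim_const_over_n)
  qed
  then show ?thesis unfolding S_def by (rule LIM_zero_cancel)
qed

end
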